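(* Assume the setting described in the context and suppose the event $\mathcal{E}$ holds. There is an absolute constant $C>0$ such that the following holds. Let $p\in\{1,\dots,k-1\}$ and $\gamma\in(0,1)$, let $S^{(p)}\subseteq[n]$ with $|S^{(p)}|=p$, let $\hat{\mathbf{e}}^{(p)}$ be a unit eigenvector for the largest eigenvalue of $\hat{\boldsymbol{\Gamma}}_{S^{(p)},S^{(p)}}$ zero-padded to $\mathbb{R}^n$, and let $S^{(p+1)}$ be the index set of the $p+1$ largest entries of $|\hat{\boldsymbol{\Gamma}}\hat{\mathbf{e}}^{(p)}|$. If $$ m\ \ge\ C\frac{(1+\theta)^2}{\theta^2\gamma^2(1-\sqrt\gamma)^2}(p+1)s^2(p+1)\log n\quad\text{and}\quad \|\mathbf{v}_{S^{(p)}}\|_2\ \ge\ \sqrt{\frac{\gamma}{s(p)}}, $$ then $$ \|\mathbf{v}_{S^{(p+1)}}\|_2\ \ge\ \sqrt{\frac{\gamma}{s(p+1)}}. $$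
   Context: Let $n\ge 2$, $m\ge1$, $\theta>0$, $k\in[n]$; $\mathbf{v}\in\mathbb{R}^n$ a unit vector with at most $k$ nonzero entries; $\mathbf{x}_1,\dots,\mathbf{x}_m$ i.i.d. $\mathcal{N}(\mathbf{0},\mathbf{I}_n+\theta\mathbf{v}\mathbf{v}^\top)$; $\hat{\boldsymbol{\Gamma}}=\frac1m\sum_i\mathbf{x}_i\mathbf{x}_i^\top-\mathbf{I}_n$; $\mathbf{W}=\hat{\boldsymbol{\Gamma}}-\theta\mathbf{v}\mathbf{v}^\top$. $\mathbf{v}_S$ is the restriction of $\mathbf{v}$ to $S$, $\mathbf{A}_{S,U}$ a submatrix, $\|\cdot\|_2$ Euclidean/spectral norm. $v_{(1)}\ge v_{(2)}\ge\cdots$ are the sorted absolute entries of $\mathbf{v}$ and $s(p)=(\sum_{i=1}^pv_{(i)}^2)^{-1}$ for $1\le p\le k$. Fix an absolute constant $C_0>0$; $\mathcal{E}$ is the event that $\|\mathbf{W}_{S,S}\|_2\le C_0(1+\theta)\sqrt{|S|\log n/m}$ for all nonempty $S\subseteq[n]$. Absolute constants do not depend on $n,m,k,p,\theta,\mathbf{v},\gamma$. *)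

theory Defs
  imports Complex_Main
begin

text \<open>Vectors in R^n are functions nat => real read on indices {..<n};
  n x n matrices are functions nat => nat => real read on {..<n} x {..<n}.\<close>

definition sqnorm_on :: "nat set \<Rightarrow> (nat \<Rightarrow> real) \<Rightarrow> real" where
  "sqnorm_on S u = sqrt (\<Sum>i\<in>S. (u i)^2)"

definition spec_norm :: "(nat \<Rightarrow> nat \<Rightarrow> real) \<Rightarrow> nat set \<Rightarrow> nat set \<Rightarrow> real" where
  "spec_norm A S U = Sup {sqrt (\<Sum>i\<in>S. (\<Sum>j\<in>U. A i j * x j)^2) | x. (\<Sum>j\<in>U. (x j)^2) = 1}"

definition Gamma_hat :: "nat \<Rightarrow> (nat \<Rightarrow> nat \<Rightarrow> real) \<Rightarrow> nat \<Rightarrow> nat \<Rightarrow> real" where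
  "Gamma_hat m x i j = (1 / real m) * (\<Sum>l<m. x l i * x l j) - (if i = j then 1 else 0)"

definition W_mat :: "nat \<Rightarrow> (nat \<Rightarrow> nat \<Rightarrow> real) \<Rightarrow> real \<Rightarrow> (nat \<Rightarrow> real) \<Rightarrow> nat \<Rightarrow> nat \<Rightarrow> real" where
  "W_mat m x \<theta> v i j = Gamma_hat m x i j - \<theta> * v i * v j"

definition event_E :: "real \<Rightarrow> nat \<Rightarrow> nat \<Rightarrow> (nat \<Rightarrow> nat \<Rightarrow> real) \<Rightarrow> real \<Rightarrow> (nat \<Rightarrow> real) \<Rightarrow> bool" where
  "event_E C0 n m x \<theta> v \<longleftrightarrow>
     (\<forall>S. S \<subseteq> {..<n} \<and> S \<noteq> {} \<longrightarrow>
        spec_norm (W_mat m x \<theta> v) S S \<le> C0 * (1 + \<theta>) * sqrt (real (card S) * ln (real n) / real m))"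

text \<open>Sorted absolute entries v_(1) >= v_(2) >= ... (0-based list index) and s(p).\<close>
definition sorted_abs :: "nat \<Rightarrow> (nat \<Rightarrow> real) \<Rightarrow> real list" where
  "sorted_abs n v = rev (sort (map (\<lambda>i. \<bar>v i\<bar>) [0..<n]))"

definition s_fun :: "nat \<Rightarrow> (nat \<Rightarrow> real) \<Rightarrow> nat \<Rightarrow> real" where
  "s_fun n v p = 1 / (\<Sum>i<p. (sorted_abs n v ! i)^2)"

definition is_eigenpair_on :: "(nat \<Rightarrow> nat \<Rightarrow> real) \<Rightarrow> nat set \<Rightarrow> real \<Rightarrow> (nat \<Rightarrow> real) \<Rightarrow> bool" where
  "is_eigenpair_on A S \<mu> u \<longleftrightarrow> (\<exists>i\<in>S. u i \<noteq> 0) \<and>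
      (\<forall>i\<in>S. (\<Sum>j\<in>S. A i j * u j) = \<mu> * u i)"

definition top_eigvec_padded :: "nat \<Rightarrow> (nat \<Rightarrow> nat \<Rightarrow> real) \<Rightarrow> nat set \<Rightarrow> (nat \<Rightarrow> real) \<Rightarrow> bool" where
  "top_eigvec_padded n A S e \<longleftrightarrow>
     (\<forall>i. i \<notin> S \<longrightarrow> e i = 0) \<and> (\<Sum>i\<in>S. (e i)^2) = 1 \<and>
     (\<exists>lam. is_eigenpair_on A S lam e \<and> (\<forall>\<mu> u. is_eigenpair_on A S \<mu> u \<longrightarrow> \<mu> \<le> lam))"

definition top_entries :: "nat \<Rightarrow> nat \<Rightarrow> (nat \<Rightarrow> real) \<Rightarrow> nat set \<Rightarrow> bool" where
  "top_entries n q g T \<longleftrightarrow> T \<subseteq> {..<n} \<and> card T = q \<and>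
     (\<forall>i\<in>T. \<forall>j\<in>{..<n} - T. \<bar>g j\<bar> \<le> \<bar>g i\<bar>)"

definition mat_vec :: "nat \<Rightarrow> (nat \<Rightarrow> nat \<Rightarrow> real) \<Rightarrow> (nat \<Rightarrow> real) \<Rightarrow> nat \<Rightarrow> real" where
  "mat_vec n A u i = (\<Sum>j<n. A i j * u j)"

end

theory Submission
  imports Defs "HOL-Analysis.Analysis" "HOL-Combinatorics.Permutations"
begin


lemma quad_expand:
  fixes A :: "nat \<Rightarrow> nat \<Rightarrow> real" and x y :: "nat \<Rightarrow> real" and t :: real
  shows
  "(\<Sum>i\<in>S. (x i + t*y i) * (\<Sum>j\<in>S. A i j * (x j + t*y j))) =
   (\<Sum>i\<in>S. x i * (\<Sum>j\<in>S. A i j * x j)) + t*(\<Sum>i\<in>S. x i*(\<Sum>j\<in>S. A i j*y j))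
   + t*(\<Sum>i\<in>S. y i*(\<Sum>j\<in>S. A i j*x j)) + t^2*(\<Sum>i\<in>S. y i*(\<Sum>j\<in>S. A i j*y j))"
proof -
  have "\<And>i. (x i + t*y i) * (\<Sum>j\<in>S. A i j * (x j + t*y j)) =
     x i * (\<Sum>j\<in>S. A i j * x j) + t*(x i*(\<Sum>j\<in>S. A i j*y j))
   + t*(y i*(\<Sum>j\<in>S. A i j*x j)) + t^2*(y i*(\<Sum>j\<in>S. A i j*y j))"
  proof -
    fix i
    have "(\<Sum>j\<in>S. A i j * (x j + t*y j)) = (\<Sum>j\<in>S. A i j * x j) + t * (\<Sum>j\<in>S. A i j * y j)"
      by (simp add: distrib_left sum.distrib sum_distrib_left mult.left_commute)
    then show "(x i + t*y i) * (\<Sum>j\<in>S. A i j * (x j + t*y j)) =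
     x i * (\<Sum>j\<in>S. A i j * x j) + t*(x i*(\<Sum>j\<in>S. A i j*y j))
   + t*(y i*(\<Sum>j\<in>S. A i j*x j)) + t^2*(y i*(\<Sum>j\<in>S. A i j*y j))"
      by (simp add: algebra_simps power2_eq_square)
  qed
  then show ?thesis by (simp add: sum.distrib sum_distrib_left)
qed

lemma bil_sym:
  fixes A :: "nat \<Rightarrow> nat \<Rightarrow> real" and x y :: "nat \<Rightarrow> real"
  assumes "\<And>i j. A i j = A j i"
  shows "(\<Sum>i\<in>S. x i*(\<Sum>j\<in>S. A i j*y j)) = (\<Sum>i\<in>S. y i*(\<Sum>j\<in>S. A i j*x j))"
proof -
  have "(\<Sum>i\<in>S. x i*(\<Sum>j\<in>S. A i j*y j)) = (\<Sum>i\<in>S. \<Sum>j\<in>S. x i * A i j*y j)"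
    by (rule sum.cong) (simp_all add: sum_distrib_left ac_simps)
  also have "\<dots> = (\<Sum>j\<in>S. \<Sum>i\<in>S. x i * A i j*y j)" by (rule sum.swap)
  also have "\<dots> = (\<Sum>j\<in>S. y j*(\<Sum>i\<in>S. A j i*x i))"
    by (simp add: sum_distrib_left assms mult.commute mult.left_commute)
  finally show ?thesis .
qed

lemma compact_box:
  "compact {x::nat\<Rightarrow>real. \<forall>i. x i \<in> (if i \<in> S then {-1..1} else {0})}"
proof -
  have "compactin (product_topology (\<lambda>i. euclidean) UNIV) (PiE UNIV (\<lambda>i. if i \<in> S then {-1..1::real} else {0}))"
    by (subst compactin_PiE) auto
  then have "compact (PiE UNIV (\<lambda>i. if i \<in> S then {-1..1::real} else {0}))"
    by (simp add: euclidean_product_topology)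
  moreover have "PiE UNIV (\<lambda>i. if i \<in> S then {-1..1::real} else {0}) = {x::nat\<Rightarrow>real. \<forall>i. x i \<in> (if i \<in> S then {-1..1} else {0})}"
    by (auto simp: PiE_UNIV_domain Pi_def split: if_split_asm)
  ultimately show ?thesis by simp
qed

lemma cont_sq: "continuous_on UNIV (\<lambda>x::nat\<Rightarrow>real. \<Sum>i\<in>S. (x i)^2)"
  by (intro continuous_intros continuous_on_product_coordinates)

lemma cont_Q: "continuous_on K (\<lambda>x::nat\<Rightarrow>real. \<Sum>i\<in>S. x i * (\<Sum>j\<in>S. A i j * x j))"
proof -
  have "continuous_on UNIV (\<lambda>x::nat\<Rightarrow>real. \<Sum>i\<in>S. x i * (\<Sum>j\<in>S. A i j * x j))"
    by (intro continuous_intros continuous_on_product_coordinates)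
  then show ?thesis using continuous_on_subset by blast
qed

lemma rayleigh_exists:
  fixes A :: "nat \<Rightarrow> nat \<Rightarrow> real" and S :: "nat set"
  assumes fin: "finite S" and ne: "S \<noteq> {}" and sym: "\<And>i j. A i j = A j i"
  shows "\<exists>\<mu> u. is_eigenpair_on A S \<mu> u \<and>
     (\<forall>w. (\<Sum>i\<in>S. w i * (\<Sum>j\<in>S. A i j * w j)) \<le> \<mu> * (\<Sum>i\<in>S. (w i)^2))"
proof -
  define Q where "Q = (\<lambda>w::nat\<Rightarrow>real. \<Sum>i\<in>S. w i * (\<Sum>j\<in>S. A i j * w j))"
  define N where "N = (\<lambda>w::nat\<Rightarrow>real. \<Sum>i\<in>S. (w i)^2)"
  define K where "K = {x::nat\<Rightarrow>real. \<forall>i. x i \<in> (if i \<in> S then {-1..1} else {0})} \<inter> {x. N x = 1}"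
  have "compact K" unfolding K_def N_def
    by (intro compact_Int_closed compact_box closed_Collect_eq cont_sq continuous_on_const)
  moreover have "K \<noteq> {}"
  proof -
    obtain i0 where i0: "i0 \<in> S" using ne by blast
    have "N (\<lambda>i. if i = i0 then 1 else 0) = 1"
      unfolding N_def using fin i0
      by (subst sum.cong[OF refl, of _ _ "\<lambda>i. if i = i0 then 1 else 0"]) auto
    then have "(\<lambda>i. if i = i0 then 1 else 0) \<in> K" using i0 unfolding K_def by auto
    then show ?thesis by blast
  qed
  moreover have "continuous_on K Q" unfolding Q_def by (rule cont_Q)
  ultimately obtain u where uK: "u \<in> K" and umax: "\<And>y. y \<in> K \<Longrightarrow> Q y \<le> Q u"
    using continuous_attains_sup[of K Q] by blast
  define M where "M = Q u"
  have Nu: "N u = 1" using uK unfolding K_def by auto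
  have homQ: "Q (\<lambda>i. c * w i) = c^2 * Q w" for c w
    unfolding Q_def by (simp add: sum_distrib_left power2_eq_square algebra_simps)
  have homN: "N (\<lambda>i. c * w i) = c^2 * N w" for c w
    unfolding N_def by (simp add: sum_distrib_left power_mult_distrib)
  have N0: "N w = 0 \<Longrightarrow> \<forall>i\<in>S. w i = 0" for w
    unfolding N_def using fin by (simp add: sum_nonneg_eq_0_iff)
  have Nnn: "N w \<ge> 0" for w unfolding N_def by (simp add: sum_nonneg)
  have QS: "Q w = Q (\<lambda>i. if i \<in> S then w i else 0)" for w
    unfolding Q_def by (intro sum.cong refl) auto
  have NS: "N w = N (\<lambda>i. if i \<in> S then w i else 0)" for w
    unfolding N_def by (intro sum.cong refl) auto
  have bound: "Q w \<le> M * N w" for w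
  proof (cases "N w = 0")
    case True
    then have "Q w = 0" using N0[OF True] unfolding Q_def by simp
    then show ?thesis using True by simp
  next
    case False
    then have Np: "N w > 0" using Nnn[of w] by linarith
    define c where "c = 1 / sqrt (N w)"
    have c2: "c^2 = 1 / N w" unfolding c_def using Np by (simp add: power_divide)
    define y where "y = (\<lambda>i. if i \<in> S then c * w i else 0)"
    have Ny: "N y = 1" unfolding y_def using NS[of "\<lambda>i. c * w i"] homN[of c w] c2 Np by simp
    have "\<forall>i. y i \<in> (if i \<in> S then {-1..1} else {0})"
    proof
      fix i
      show "y i \<in> (if i \<in> S then {-1..1} else {0})"
      proof (cases "i \<in> S")
        case True
        have "(y i)^2 \<le> N y" unfolding N_def
          using fin True by (intro member_le_sum) auto
        then have "(y i)^2 \<le> 1" using Ny by simp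
        then have "\<bar>y i\<bar> \<le> 1" using abs_le_square_iff[of "y i" 1] by simp
        then show ?thesis using True by auto
      qed (simp add: y_def)
    qed
    then have "y \<in> K" unfolding K_def using Ny by auto
    then have "Q y \<le> M" using umax M_def by simp
    moreover have "Q y = c^2 * Q w" unfolding y_def using QS[of "\<lambda>i. c * w i"] homQ[of c w] by simp
    ultimately have "Q w / N w \<le> M" using c2 by simp
    then show ?thesis using Np by (simp add: pos_divide_le_eq mult.commute)
  qed
  define r where "r = (\<lambda>i. (\<Sum>j\<in>S. A i j * u j) - M * u i)"
  define c where "c = Q r - M * N r"
  have key: "2 * t * N r + t^2 * c \<le> 0" for t
  proof -
    have "Q (\<lambda>i. u i + t * r i) \<le> M * N (\<lambda>i. u i + t * r i)" by (rule bound)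
    moreover have "Q (\<lambda>i. u i + t * r i) = Q u + 2 * t * (\<Sum>i\<in>S. r i*(\<Sum>j\<in>S. A i j*u j)) + t^2 * Q r"
      unfolding Q_def quad_expand bil_sym[OF sym, where x=u and y=r and S=S] by simp
    moreover have "N (\<lambda>i. u i + t * r i) = N u + 2 * t * (\<Sum>i\<in>S. r i * u i) + t^2 * N r"
      unfolding N_def by (simp add: power2_eq_square algebra_simps sum.distrib sum_distrib_left)
    moreover have "(\<Sum>i\<in>S. r i*(\<Sum>j\<in>S. A i j*u j)) - M * (\<Sum>i\<in>S. r i * u i) = N r"
    proof -
      have "(\<Sum>i\<in>S. r i*(\<Sum>j\<in>S. A i j*u j)) - M * (\<Sum>i\<in>S. r i * u i) = (\<Sum>i\<in>S. r i * r i)"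
      proof -
        have "(\<Sum>i\<in>S. r i*(\<Sum>j\<in>S. A i j*u j)) - M * (\<Sum>i\<in>S. r i * u i)
            = (\<Sum>i\<in>S. r i*(\<Sum>j\<in>S. A i j*u j) - M*(r i * u i))"
          by (simp only: sum_subtractf sum_distrib_left)
        also have "\<dots> = (\<Sum>i\<in>S. r i * r i)"
        proof (intro sum.cong refl)
          fix i
          have "r i*(\<Sum>j\<in>S. A i j*u j) - M*(r i * u i) = r i * ((\<Sum>j\<in>S. A i j*u j) - M * u i)"
            by (simp only: right_diff_distrib mult.left_commute)
          also have "\<dots> = r i * r i" unfolding r_def by (rule refl)
          finally show "r i*(\<Sum>j\<in>S. A i j*u j) - M*(r i * u i) = r i * r i" .
        qed
        finally show ?thesis .
      qed
      then show ?thesis unfolding N_def by (simp add: power2_eq_square)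
    qed
    ultimately show ?thesis unfolding c_def M_def using Nu by (simp add: algebra_simps)
  qed
  have "N r = 0"
  proof (rule ccontr)
    assume "N r \<noteq> 0"
    then have Np: "N r > 0" using Nnn[of r] by linarith
    define t where "t = N r / (\<bar>c\<bar> + 1)"
    have tp: "t > 0" unfolding t_def using Np by simp
    have "t^2 * (- c) \<le> t^2 * \<bar>c\<bar>"
      by (rule mult_left_mono[OF abs_ge_minus_self zero_le_power2])
    then have "2 * t * N r \<le> t^2 * \<bar>c\<bar>" using key[of t] by simp
    then have "t * (2 * N r) \<le> t * (t * \<bar>c\<bar>)" by (simp add: power2_eq_square algebra_simps)
    then have "2 * N r \<le> t * \<bar>c\<bar>" using tp by simp
    moreover have "t * \<bar>c\<bar> < N r"
    proof -
      have "t * \<bar>c\<bar> = N r * (\<bar>c\<bar> / (\<bar>c\<bar> + 1))" unfolding t_def by simp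
      also have "\<dots> < N r * 1"
        by (rule mult_strict_left_mono[OF _ Np]) simp
      finally show ?thesis by simp
    qed
    ultimately show False using Np by linarith
  qed
  then have r0: "\<forall>i\<in>S. r i = 0" using N0 by blast
  have "\<exists>i\<in>S. u i \<noteq> 0"
  proof (rule ccontr)
    assume "\<not> ?thesis"
    then have "N u = 0" unfolding N_def by simp
    then show False using Nu by simp
  qed
  then have "is_eigenpair_on A S M u" unfolding is_eigenpair_on_def using r0 unfolding r_def by simp
  then show ?thesis using bound unfolding Q_def N_def by blast
qed



lemma L2_abs: "L2_set (\<lambda>i. \<bar>f i\<bar>) S = L2_set f S"
  unfolding L2_set_def by simp

lemma L2_scale: "L2_set (\<lambda>i. c * f i) S = \<bar>c\<bar> * L2_set f S"
  unfolding L2_set_def by (simp add: power_mult_distrib sum_distrib_left[symmetric] real_sqrt_mult)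

lemma spec_bound:
  fixes A :: "nat \<Rightarrow> nat \<Rightarrow> real" and x :: "nat \<Rightarrow> real"
  assumes finU: "finite U"
  shows "L2_set (\<lambda>i. \<Sum>j\<in>U. A i j * x j) S \<le> spec_norm A S U * L2_set x U"
proof (cases "L2_set x U = 0")
  case True
  then have "\<forall>j\<in>U. x j = 0" using L2_set_eq_0_iff[OF finU] by blast
  then have "L2_set (\<lambda>i. \<Sum>j\<in>U. A i j * x j) S = 0" by (simp add: L2_set_0')
  then show ?thesis using True by simp
next
  case False
  define c where "c = L2_set x U"
  have cp: "c > 0" using False L2_set_nonneg[of x U] unfolding c_def by linarith
  define y where "y = (\<lambda>j. x j / c)"
  have c2: "c^2 = (\<Sum>j\<in>U. (x j)^2)" unfolding c_def L2_set_def
    by (simp add: sum_nonneg)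
  have "(\<Sum>j\<in>U. (x j)^2) \<noteq> 0" using cp c2 by (metis power_not_zero less_irrefl)
  then have Ny: "(\<Sum>j\<in>U. (y j)^2) = 1" unfolding y_def using cp c2
    by (simp add: power_divide sum_divide_distrib[symmetric])
  define X where "X = {sqrt (\<Sum>i\<in>S. (\<Sum>j\<in>U. A i j * z j)^2) | z. (\<Sum>j\<in>U. (z j)^2) = 1}"
  have bdd: "bdd_above X"
  proof (rule bdd_aboveI)
    fix t assume "t \<in> X"
    then obtain z where t: "t = sqrt (\<Sum>i\<in>S. (\<Sum>j\<in>U. A i j * z j)^2)" and z: "(\<Sum>j\<in>U. (z j)^2) = 1"
      unfolding X_def by blast
    have Lz: "L2_set z U = 1" unfolding L2_set_def z by simp
    have "t = L2_set (\<lambda>i. \<bar>\<Sum>j\<in>U. A i j * z j\<bar>) S" unfolding t L2_abs L2_set_def ..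
    also have "\<dots> \<le> L2_set (\<lambda>i. L2_set (A i) U) S"
    proof (rule L2_set_mono)
      fix i
      have "\<bar>\<Sum>j\<in>U. A i j * z j\<bar> \<le> (\<Sum>j\<in>U. \<bar>A i j\<bar> * \<bar>z j\<bar>)"
        by (metis (no_types, lifting) abs_mult sum.cong sum_abs)
      also have "\<dots> \<le> L2_set (A i) U * L2_set z U" by (rule L2_set_mult_ineq)
      finally show "\<bar>\<Sum>j\<in>U. A i j * z j\<bar> \<le> L2_set (A i) U" using Lz by simp
    qed simp
    finally show "t \<le> L2_set (\<lambda>i. L2_set (A i) U) S" .
  qed
  have mem: "sqrt (\<Sum>i\<in>S. (\<Sum>j\<in>U. A i j * y j)^2) \<in> X" unfolding X_def using Ny by blast
  have "sqrt (\<Sum>i\<in>S. (\<Sum>j\<in>U. A i j * y j)^2) \<le> spec_norm A S U"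
    unfolding spec_norm_def X_def[symmetric] using cSup_upper[OF mem bdd] .
  moreover have "sqrt (\<Sum>i\<in>S. (\<Sum>j\<in>U. A i j * y j)^2) = L2_set (\<lambda>i. \<Sum>j\<in>U. A i j * x j) S / c"
  proof -
    have e: "\<And>i. (\<Sum>j\<in>U. A i j * y j) = (1/c) * (\<Sum>j\<in>U. A i j * x j)"
      unfolding y_def by (simp add: sum_distrib_left)
    have "sqrt (\<Sum>i\<in>S. (\<Sum>j\<in>U. A i j * y j)^2) = L2_set (\<lambda>i. (1/c) * (\<Sum>j\<in>U. A i j * x j)) S"
      unfolding L2_set_def e by (rule refl)
    then show ?thesis unfolding L2_scale using cp by simp
  qed
  ultimately have "L2_set (\<lambda>i. \<Sum>j\<in>U. A i j * x j) S / c \<le> spec_norm A S U" by simp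
  then show ?thesis using cp unfolding c_def[symmetric] by (simp add: pos_divide_le_eq)
qed

lemma top_sum:
  fixes g :: "nat \<Rightarrow> real"
  assumes top: "top_entries n q g T" and U: "U \<subseteq> {..<n}" and cU: "card U = q"
  shows "(\<Sum>i\<in>U. (g i)^2) \<le> (\<Sum>i\<in>T. (g i)^2)"
proof -
  have T: "T \<subseteq> {..<n}" "card T = q" and dom: "\<And>i j. i \<in> T \<Longrightarrow> j \<in> {..<n} - T \<Longrightarrow> \<bar>g j\<bar> \<le> \<bar>g i\<bar>"
    using top unfolding top_entries_def by auto
  have fT: "finite T" and fU: "finite U" using T U finite_subset by auto
  have c1: "card (U - T) = card U - card (U \<inter> T)" using fU by (simp add: card_Diff_subset_Int)
  have c2: "card (T - U) = card T - card (T \<inter> U)" using fT by (simp add: card_Diff_subset_Int)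
  have "card (U - T) = card (T - U)" unfolding c1 c2 cU T(2) by (simp add: Int_commute)
  then obtain h where h: "bij_betw h (U - T) (T - U)"
    using finite_same_card_bij[of "U - T" "T - U"] fT fU by auto
  have "(\<Sum>i\<in>U - T. (g i)^2) \<le> (\<Sum>i\<in>U - T. (g (h i))^2)"
  proof (rule sum_mono)
    fix i assume i: "i \<in> U - T"
    then have "h i \<in> T" using h bij_betwE by blast
    moreover have "i \<in> {..<n} - T" using i U by auto
    ultimately have "\<bar>g i\<bar> \<le> \<bar>g (h i)\<bar>" using dom by blast
    then show "(g i)^2 \<le> (g (h i))^2" using abs_le_square_iff by blast
  qed
  also have "\<dots> = (\<Sum>i\<in>T - U. (g i)^2)" using sum.reindex_bij_betw[OF h, of "\<lambda>i. (g i)^2"] .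
  finally have d: "(\<Sum>i\<in>U - T. (g i)^2) \<le> (\<Sum>i\<in>T - U. (g i)^2)" .
  have "(\<Sum>i\<in>U. (g i)^2) = (\<Sum>i\<in>U - T. (g i)^2) + (\<Sum>i\<in>U \<inter> T. (g i)^2)"
    using sum.Int_Diff[OF fU, of "\<lambda>i. (g i)^2" T] by simp
  moreover have "(\<Sum>i\<in>T. (g i)^2) = (\<Sum>i\<in>T - U. (g i)^2) + (\<Sum>i\<in>U \<inter> T. (g i)^2)"
    using sum.Int_Diff[OF fT, of "\<lambda>i. (g i)^2" U] by (simp add: Int_commute)
  ultimately show ?thesis using d by simp
qed



lemma sa_len: "length (sorted_abs n v) = n"
  unfolding sorted_abs_def by simp

lemma sa_mono:
  assumes "i \<le> j" "j < n"
  shows "sorted_abs n v ! j \<le> sorted_abs n v ! i"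
proof -
  define xs where "xs = sort (map (\<lambda>i. \<bar>v i\<bar>) [0..<n])"
  have len: "length xs = n" unfolding xs_def by simp
  have s: "sorted xs" unfolding xs_def by simp
  have "sorted_abs n v = rev xs" unfolding sorted_abs_def xs_def ..
  moreover have "xs ! (n - Suc j) \<le> xs ! (n - Suc i)"
    using assms len by (intro sorted_nth_mono[OF s]) auto
  ultimately show ?thesis using assms len by (simp add: rev_nth)
qed

lemma sa_set_eq: "set (sorted_abs n v) = (\<lambda>i. \<bar>v i\<bar>) ` {..<n}"
  unfolding sorted_abs_def by auto

lemma sa_nonneg: "i < n \<Longrightarrow> 0 \<le> sorted_abs n v ! i"
proof -
  assume "i < n"
  then have "sorted_abs n v ! i \<in> set (sorted_abs n v)" using sa_len[of n v] by simp
  then show ?thesis unfolding sa_set_eq by auto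
qed

lemma sa_max: "i < n \<Longrightarrow> \<bar>v i\<bar> \<le> sorted_abs n v ! 0"
proof -
  assume i: "i < n"
  then have "\<bar>v i\<bar> \<in> set (sorted_abs n v)" unfolding sa_set_eq by auto
  then obtain k where k: "k < n" "sorted_abs n v ! k = \<bar>v i\<bar>"
    using sa_len[of n v] by (metis in_set_conv_nth)
  then show ?thesis using sa_mono[of 0 k n v] by simp
qed

lemma sa_top:
  assumes "q \<le> n"
  shows "\<exists>U \<subseteq> {..<n}. card U = q \<and> (\<Sum>i\<in>U. (v i)^2) = (\<Sum>i<q. (sorted_abs n v ! i)^2)"
proof -
  define xs where "xs = map (\<lambda>i. \<bar>v i\<bar>) [0..<n]"
  have "mset (sorted_abs n v) = mset xs" unfolding sorted_abs_def xs_def by simp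
  then obtain \<pi> where pi: "\<pi> permutes {..<length xs}" "permute_list \<pi> xs = sorted_abs n v"
    using mset_eq_permutation by blast
  have len: "length xs = n" unfolding xs_def by simp
  have Lnth: "sorted_abs n v ! i = \<bar>v (\<pi> i)\<bar>" if "i < n" for i
  proof -
    have "\<pi> i < n" using permutes_in_image[OF pi(1)] that len by auto
    have "sorted_abs n v ! i = xs ! \<pi> i" unfolding pi(2)[symmetric]
      using permute_list_nth[OF pi(1)] that len by simp
    then show ?thesis using \<open>\<pi> i < n\<close> unfolding xs_def by simp
  qed
  have pi1: "\<pi> permutes {..<n}" using pi(1) len by simp
  have inj: "inj_on \<pi> {..<q}" using permutes_inj[OF pi1] inj_on_subset subset_UNIV by blast
  define U where "U = \<pi> ` {..<q}"
  have "U \<subseteq> {..<n}"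
  proof
    fix y assume "y \<in> U"
    then obtain i where i: "i < q" "y = \<pi> i" unfolding U_def by blast
    then have "i \<in> {..<n}" using assms by simp
    then show "y \<in> {..<n}" using i(2) permutes_in_image[OF pi1, of i] by simp
  qed
  moreover have "card U = q" unfolding U_def using card_image[OF inj] by simp
  moreover have "(\<Sum>i\<in>U. (v i)^2) = (\<Sum>i<q. (sorted_abs n v ! i)^2)"
  proof -
    have "(\<Sum>i\<in>U. (v i)^2) = (\<Sum>i<q. (v (\<pi> i))^2)"
      unfolding U_def using sum.reindex[OF inj, of "\<lambda>i. (v i)^2"] by simp
    also have "\<dots> = (\<Sum>i<q. (sorted_abs n v ! i)^2)"
    proof (rule sum.cong[OF refl])
      fix i assume "i \<in> {..<q}"
      then have "i < n" using assms by simp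
      then show "(v (\<pi> i))^2 = (sorted_abs n v ! i)^2" using Lnth[of i] by simp
    qed
    finally show ?thesis .
  qed
  ultimately show ?thesis by blast
qed



lemma L2_sq: "(L2_set w S)^2 = (\<Sum>i\<in>S. (w i)^2)"
  unfolding L2_set_def by (simp add: sum_nonneg)

lemma quad_bound:
  fixes A :: "nat \<Rightarrow> nat \<Rightarrow> real"
  assumes "finite S"
  shows "\<bar>\<Sum>i\<in>S. w i * (\<Sum>j\<in>S. A i j * w j)\<bar> \<le> spec_norm A S S * (\<Sum>i\<in>S. (w i)^2)"
proof -
  have "\<bar>\<Sum>i\<in>S. w i * (\<Sum>j\<in>S. A i j * w j)\<bar> \<le> (\<Sum>i\<in>S. \<bar>w i\<bar> * \<bar>\<Sum>j\<in>S. A i j * w j\<bar>)"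
    by (metis (no_types, lifting) abs_mult sum.cong sum_abs)
  also have "\<dots> \<le> L2_set w S * L2_set (\<lambda>i. \<Sum>j\<in>S. A i j * w j) S" by (rule L2_set_mult_ineq)
  also have "\<dots> \<le> L2_set w S * (spec_norm A S S * L2_set w S)"
    by (rule mult_left_mono[OF spec_bound[OF assms] L2_set_nonneg])
  also have "\<dots> = spec_norm A S S * (L2_set w S)^2" by (simp add: power2_eq_square)
  finally show ?thesis unfolding L2_sq .
qed

lemma wbound:
  fixes W :: "nat \<Rightarrow> nat \<Rightarrow> real"
  assumes finR: "finite R" and SR: "S \<subseteq> R" and TR: "T \<subseteq> R" and e0: "\<forall>i. i \<notin> S \<longrightarrow> e i = 0"
    and e1: "(\<Sum>i\<in>S. (e i)^2) = 1"
  shows "L2_set (\<lambda>i. \<Sum>j\<in>S. W i j * e j) T \<le> spec_norm W R R"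
proof -
  have eq: "(\<Sum>j\<in>S. W i j * e j) = (\<Sum>j\<in>R. W i j * e j)" for i
    by (rule sum.mono_neutral_left[OF finR SR]) (use e0 in auto)
  have "L2_set (\<lambda>i. \<Sum>j\<in>S. W i j * e j) T \<le> L2_set (\<lambda>i. \<Sum>j\<in>S. W i j * e j) R"
    unfolding L2_set_def by (intro real_sqrt_le_mono sum_mono2[OF finR TR]) auto
  also have "\<dots> = L2_set (\<lambda>i. \<Sum>j\<in>R. W i j * e j) R" unfolding eq ..
  also have "\<dots> \<le> spec_norm W R R * L2_set e R" by (rule spec_bound[OF finR])
  also have "L2_set e R = 1"
  proof -
    have "(\<Sum>i\<in>R. (e i)^2) = (\<Sum>i\<in>S. (e i)^2)"
      by (rule sum.mono_neutral_right[OF finR SR]) (use e0 in auto)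
    then show ?thesis unfolding L2_set_def e1 by simp
  qed
  finally show ?thesis by simp
qed

lemma quad_decomp:
  fixes W :: "nat \<Rightarrow> nat \<Rightarrow> real"
  assumes "\<And>i j. A i j = \<theta> * v i * v j + W i j"
  shows "(\<Sum>i\<in>S. w i * (\<Sum>j\<in>S. A i j * w j)) = \<theta> * (\<Sum>i\<in>S. v i * w i)^2 + (\<Sum>i\<in>S. w i * (\<Sum>j\<in>S. W i j * w j))"
proof -
  have r: "(\<Sum>j\<in>S. A i j * w j) = \<theta> * v i * (\<Sum>j\<in>S. v j * w j) + (\<Sum>j\<in>S. W i j * w j)" for i
    unfolding assms by (simp add: algebra_simps sum.distrib sum_distrib_left)
  have "(\<Sum>i\<in>S. w i * (\<Sum>j\<in>S. A i j * w j)) = (\<Sum>i\<in>S. (\<theta> * (\<Sum>j\<in>S. v j * w j)) * (v i * w i) + w i * (\<Sum>j\<in>S. W i j * w j))"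
    unfolding r by (intro sum.cong refl) (simp add: algebra_simps)
  also have "\<dots> = \<theta> * (\<Sum>i\<in>S. v i * w i)^2 + (\<Sum>i\<in>S. w i * (\<Sum>j\<in>S. W i j * w j))"
    by (simp add: sum.distrib sum_distrib_left[symmetric] power2_eq_square mult.assoc)
  finally show ?thesis .
qed

lemma alg:
  fixes a b d z c Y P L :: real
  assumes "a \<noteq> 0" "b \<noteq> 0" "d \<noteq> 0" "z \<noteq> 0"
  shows "(a*b*d*z/16)^2 * (256*c*Y/(a^2*b^2*d^2) * P * (1/z)^2 * L) = c*Y*P*L"
  using assms by (simp add: power_mult_distrib power_divide field_simps)

lemma DBl:
  fixes C0 \<theta> \<gamma> sg \<sigma> Lg m P :: real
  assumes th: "\<theta> > 0" and g0: "\<gamma> > 0" and sg1: "sg < 1" and sigpos: "\<sigma> > 0" and Lg: "Lg > 0"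
    and mpos: "m > 0" and P: "P \<ge> 0" and C0: "C0 > 0"
    and mb': "256 * C0^2 * (1 + \<theta>)^2 / (\<theta>^2 * \<gamma>^2 * (1 - sg)^2) * P * (1/\<sigma>)^2 * Lg \<le> m"
  shows "C0 * (1 + \<theta>) * sqrt (P * Lg / m) \<le> \<theta> * \<gamma> * (1 - sg) * \<sigma> / 16"
proof -
  define B where "B = \<theta> * \<gamma> * (1 - sg) * \<sigma> / 16"
  define D where "D = C0 * (1 + \<theta>) * sqrt (P * Lg / m)"
  have Bpos: "B > 0" unfolding B_def using th g0 sg1 sigpos by simp
  have nz: "\<theta> \<noteq> 0" "\<gamma> \<noteq> 0" "1 - sg \<noteq> 0" "\<sigma> \<noteq> 0" using th g0 sg1 sigpos by auto
  have e1: "B^2 * (256 * C0^2 * (1 + \<theta>)^2 / (\<theta>^2 * \<gamma>^2 * (1 - sg)^2) * P * (1/\<sigma>)^2 * Lg)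
        = C0^2 * (1 + \<theta>)^2 * P * Lg"
    unfolding B_def by (rule alg[OF nz])
  have e2: "B^2 * (256 * C0^2 * (1 + \<theta>)^2 / (\<theta>^2 * \<gamma>^2 * (1 - sg)^2) * P * (1/\<sigma>)^2 * Lg) \<le> B^2 * m"
    by (rule mult_left_mono[OF mb' zero_le_power2])
  have "C0^2 * (1 + \<theta>)^2 * P * Lg \<le> B^2 * m" using e2 unfolding e1 .
  then have "C0^2 * (1 + \<theta>)^2 * P * Lg / m \<le> B^2"
    unfolding pos_divide_le_eq[OF mpos] .
  moreover have "C0^2 * (1 + \<theta>)^2 * (P * Lg / m) = C0^2 * (1 + \<theta>)^2 * P * Lg / m"
    by simp
  ultimately have "C0^2 * (1 + \<theta>)^2 * (P * Lg / m) \<le> B^2"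
    by simp
  moreover have "D^2 = C0^2 * (1 + \<theta>)^2 * (P * Lg / m)"
    unfolding D_def using Lg mpos P by (simp add: power_mult_distrib)
  ultimately have "D^2 \<le> B^2" by simp
  then have "D \<le> B" by (rule power2_le_imp_le[OF _ less_imp_le[OF Bpos]])
  then show ?thesis unfolding D_def B_def .
qed

theorem proposition4:
  fixes C0 :: real
  assumes "C0 > 0"
  shows "\<exists>C>0. \<forall>(n::nat) (m::nat) (k::nat) (\<theta>::real) (v::nat \<Rightarrow> real)
      (x::nat \<Rightarrow> nat \<Rightarrow> real) (p::nat) (\<gamma>::real) (Sp::nat set) (e::nat \<Rightarrow> real) (Sp1::nat set).
      n \<ge> 2 \<longrightarrow> m \<ge> 1 \<longrightarrow> \<theta> > 0 \<longrightarrow> 1 \<le> k \<longrightarrow> k \<le> n \<longrightarrow>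
      (\<Sum>i<n. (v i)^2) = 1 \<longrightarrow> card {i\<in>{..<n}. v i \<noteq> 0} \<le> k \<longrightarrow>
      event_E C0 n m x \<theta> v \<longrightarrow>
      1 \<le> p \<longrightarrow> p \<le> k - 1 \<longrightarrow> 0 < \<gamma> \<longrightarrow> \<gamma> < 1 \<longrightarrow>
      Sp \<subseteq> {..<n} \<longrightarrow> card Sp = p \<longrightarrow>
      top_eigvec_padded n (Gamma_hat m x) Sp e \<longrightarrow>
      top_entries n (p + 1) (mat_vec n (Gamma_hat m x) e) Sp1 \<longrightarrow>
      real m \<ge> C * (1 + \<theta>)^2 / (\<theta>^2 * \<gamma>^2 * (1 - sqrt \<gamma>)^2)
                 * real (p + 1) * (s_fun n v (p + 1))^2 * ln (real n) \<longrightarrow>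
      sqnorm_on Sp v \<ge> sqrt (\<gamma> / s_fun n v p) \<longrightarrow>
      sqnorm_on Sp1 v \<ge> sqrt (\<gamma> / s_fun n v (p + 1))"
proof (rule exI[of _ "256 * C0^2"], intro conjI allI impI)
  show "256 * C0^2 > 0" using assms by simp
  fix n m k :: nat and \<theta> :: real and v :: "nat \<Rightarrow> real" and x :: "nat \<Rightarrow> nat \<Rightarrow> real"
    and p :: nat and \<gamma> :: real and Sp :: "nat set" and e :: "nat \<Rightarrow> real" and Sp1 :: "nat set"
  assume n2: "n \<ge> 2" and m1: "m \<ge> 1" and th: "\<theta> > 0" and k1: "1 \<le> k" and kn: "k \<le> n"
    and vn: "(\<Sum>i<n. (v i)^2) = 1" and spars: "card {i\<in>{..<n}. v i \<noteq> 0} \<le> k"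
    and EE: "event_E C0 n m x \<theta> v" and p1: "1 \<le> p" and pk: "p \<le> k - 1"
    and g0: "0 < \<gamma>" and g1: "\<gamma> < 1" and Spn: "Sp \<subseteq> {..<n}" and cSp: "card Sp = p"
    and eig: "top_eigvec_padded n (Gamma_hat m x) Sp e"
    and top: "top_entries n (p + 1) (mat_vec n (Gamma_hat m x) e) Sp1"
    and mb: "real m \<ge> 256 * C0^2 * (1 + \<theta>)^2 / (\<theta>^2 * \<gamma>^2 * (1 - sqrt \<gamma>)^2)
                 * real (p + 1) * (s_fun n v (p + 1))^2 * ln (real n)"
    and hS: "sqnorm_on Sp v \<ge> sqrt (\<gamma> / s_fun n v p)"
  define G where "G = Gamma_hat m x"
  define W where "W = W_mat m x \<theta> v"
  have GW: "G i j = \<theta> * v i * v j + W i j" for i j unfolding G_def W_def W_mat_def by simp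
  have Gsym: "G i j = G j i" for i j unfolding G_def Gamma_hat_def by (simp add: mult.commute)
  define L where "L = sorted_abs n v"
  define \<sigma> where "\<sigma> = (\<Sum>i<p+1. (L!i)^2)"
  define \<sigma>p where "\<sigma>p = (\<Sum>i<p. (L!i)^2)"
  have sf1: "s_fun n v (p+1) = 1 / \<sigma>" unfolding s_fun_def \<sigma>_def L_def ..
  have sfp: "s_fun n v p = 1 / \<sigma>p" unfolding s_fun_def \<sigma>p_def L_def ..
  define Lg where "Lg = ln (real n)"
  have Lg: "Lg > 0" unfolding Lg_def using n2 by simp
  have pn: "p + 1 \<le> n" using pk kn k1 by linarith
  have mpos: "real m > 0" using m1 by simp
  obtain i0 where i0: "i0 < n" "v i0 \<noteq> 0"
  proof -
    have "\<exists>i<n. v i \<noteq> 0"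
    proof (rule ccontr)
      assume "\<not> ?thesis"
      then have "(\<Sum>i<n. (v i)^2) = 0" by simp
      then show False using vn by simp
    qed
    then show ?thesis using that by blast
  qed
  have L0: "L!0 > 0" using sa_max[OF i0(1), of v] i0(2) unfolding L_def by simp
  have Lnn: "\<And>i. i < n \<Longrightarrow> 0 \<le> L!i" unfolding L_def by (rule sa_nonneg)
  have f1: "(L!0)^2 \<le> \<sigma>p" unfolding \<sigma>p_def
    using p1 Lnn by (intro member_le_sum[of 0 "{..<p}" "\<lambda>i. (L!i)^2"]) auto
  have f2: "(L!p)^2 \<le> (L!0)^2"
    using sa_mono[of 0 p n v] pn Lnn[of p] unfolding L_def by (intro power_mono) auto
  have f3: "\<sigma> = \<sigma>p + (L!p)^2" unfolding \<sigma>_def \<sigma>p_def by simp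
  have f4: "(L!0)^2 > 0" using L0 by simp
  have f5: "(L!p)^2 \<ge> 0" by simp
  have sig2: "\<sigma> \<le> 2 * \<sigma>p" and sigp: "\<sigma>p > 0" and sigpos: "\<sigma> > 0" and sig_ge: "\<sigma>p \<le> \<sigma>"
    using f1 f2 f3 f4 f5 by linarith+
  define Nv where "Nv = (\<Sum>i\<in>Sp. (v i)^2)"
  have "sqrt (\<gamma> * \<sigma>p) \<le> sqrt Nv" using hS unfolding sfp sqnorm_on_def Nv_def by simp
  then have Nvb: "\<gamma> * \<sigma>p \<le> Nv" by simp
  have Nvpos: "Nv > 0" using Nvb g0 sigp by (smt (verit) mult_pos_pos)
  define sg where "sg = sqrt \<gamma>"
  have sg0: "sg > 0" and sg1: "sg < 1" and sg2: "sg^2 = \<gamma>" unfolding sg_def using g0 g1 by auto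
  define B where "B = \<theta> * \<gamma> * (1 - sg) * \<sigma> / 16"
  have Bpos: "B > 0" unfolding B_def using th g0 sg1 sigpos by simp
  define \<delta> where "\<delta> = sqrt (real (p+1) * Lg / real m)"
  define D where "D = C0 * (1 + \<theta>) * \<delta>"
  have Dnn: "D \<ge> 0" unfolding D_def \<delta>_def using assms th Lg mpos by simp
  have DB: "D \<le> B"
  proof -
    have mb': "256 * C0^2 * (1 + \<theta>)^2 / (\<theta>^2 * \<gamma>^2 * (1 - sg)^2) * real (p + 1) * (1/\<sigma>)^2 * Lg \<le> real m"
      using mb unfolding sf1 sg_def Lg_def .
    show ?thesis unfolding D_def \<delta>_def B_def
      by (rule DBl[OF th g0 sg1 sigpos Lg mpos _ assms mb']) simp
  qed
  have epsR: "spec_norm W R R \<le> 2 * D" if R: "R \<subseteq> {..<n}" "R \<noteq> {}" "card R \<le> 2 * (p+1)" for R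
  proof -
    have "spec_norm W R R \<le> C0 * (1 + \<theta>) * sqrt (real (card R) * Lg / real m)"
      using EE[unfolded event_E_def, rule_format, OF conjI[OF R(1) R(2)]] unfolding W_def Lg_def .
    also have "\<dots> \<le> C0 * (1 + \<theta>) * sqrt (2 * (real (p+1) * Lg / real m))"
    proof -
      have "real (card R) * Lg / real m \<le> (2 * real (p+1)) * Lg / real m"
        using R(3) Lg mpos by (intro divide_right_mono mult_right_mono) auto
      also have "\<dots> = 2 * (real (p+1) * Lg / real m)" by simp
      finally have h: "real (card R) * Lg / real m \<le> 2 * (real (p+1) * Lg / real m)" .
      have "0 \<le> C0 * (1 + \<theta>)" using assms th by simp
      then show ?thesis by (rule mult_left_mono[OF real_sqrt_le_mono[OF h]])
    qed
    also have "\<dots> = sqrt 2 * D" unfolding D_def \<delta>_def real_sqrt_mult by (simp only: ac_simps)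
    also have "\<dots> \<le> 2 * D"
    proof -
      have "sqrt 2 \<le> (2::real)" by (rule real_le_lsqrt) simp_all
      then show ?thesis using Dnn by (intro mult_right_mono) auto
    qed
    finally show ?thesis .
  qed
  obtain lam where e0: "\<forall>i. i \<notin> Sp \<longrightarrow> e i = 0" and e1: "(\<Sum>i\<in>Sp. (e i)^2) = 1"
    and eigp: "is_eigenpair_on G Sp lam e" and lmax: "\<And>\<mu> u. is_eigenpair_on G Sp \<mu> u \<Longrightarrow> \<mu> \<le> lam"
    using eig unfolding top_eigvec_padded_def G_def by blast
  have finSp: "finite Sp" using Spn finite_subset by blast
  have Spne: "Sp \<noteq> {}" using cSp p1 by auto
  obtain \<mu>0 u0 where mu0: "is_eigenpair_on G Sp \<mu>0 u0"
    and rb: "\<And>w. (\<Sum>i\<in>Sp. w i * (\<Sum>j\<in>Sp. G i j * w j)) \<le> \<mu>0 * (\<Sum>i\<in>Sp. (w i)^2)"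
    using rayleigh_exists[OF finSp Spne, of G] Gsym by blast
  have mul: "\<mu>0 \<le> lam" using lmax[OF mu0] .
  have Qe: "(\<Sum>i\<in>Sp. e i * (\<Sum>j\<in>Sp. G i j * e j)) = lam"
  proof -
    have "(\<Sum>i\<in>Sp. e i * (\<Sum>j\<in>Sp. G i j * e j)) = (\<Sum>i\<in>Sp. lam * (e i)^2)"
      using eigp unfolding is_eigenpair_on_def by (intro sum.cong refl) (simp add: power2_eq_square)
    then show ?thesis using e1 by (simp add: sum_distrib_left[symmetric])
  qed
  define a where "a = (\<Sum>i\<in>Sp. v i * e i)"
  have epsS: "spec_norm W Sp Sp \<le> 2 * D" using epsR[OF Spn Spne] cSp by simp
  have QWe: "(\<Sum>i\<in>Sp. e i * (\<Sum>j\<in>Sp. W i j * e j)) \<le> 2 * D"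
    using quad_bound[OF finSp, where w=e and A=W] e1 epsS by simp
  have QWv: "(\<Sum>i\<in>Sp. v i * (\<Sum>j\<in>Sp. W i j * v j)) \<ge> - (2 * D) * Nv"
  proof -
    have "\<bar>\<Sum>i\<in>Sp. v i * (\<Sum>j\<in>Sp. W i j * v j)\<bar> \<le> spec_norm W Sp Sp * Nv"
      using quad_bound[OF finSp, where w=v and A=W] unfolding Nv_def .
    also have "\<dots> \<le> 2 * D * Nv" using epsS Nvpos by (intro mult_right_mono) auto
    finally show ?thesis by linarith
  qed
  have Qv: "(\<Sum>i\<in>Sp. v i * (\<Sum>j\<in>Sp. G i j * v j)) = \<theta> * Nv^2 + (\<Sum>i\<in>Sp. v i * (\<Sum>j\<in>Sp. W i j * v j))"
    using quad_decomp[where A=G and \<theta>=\<theta> and v=v and W=W and S=Sp and w=v, OF GW] unfolding Nv_def by (simp add: power2_eq_square)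
  have Qe2: "(\<Sum>i\<in>Sp. e i * (\<Sum>j\<in>Sp. G i j * e j)) = \<theta> * a^2 + (\<Sum>i\<in>Sp. e i * (\<Sum>j\<in>Sp. W i j * e j))"
    using quad_decomp[where A=G and \<theta>=\<theta> and v=v and W=W and S=Sp and w=e, OF GW] unfolding a_def .
  have "\<theta> * Nv^2 - 2 * D * Nv \<le> lam * Nv"
  proof -
    have "(\<Sum>i\<in>Sp. v i * (\<Sum>j\<in>Sp. G i j * v j)) \<le> \<mu>0 * Nv" using rb[of v] unfolding Nv_def .
    also have "\<dots> \<le> lam * Nv" using mul Nvpos by (intro mult_right_mono) auto
    finally show ?thesis using Qv QWv by linarith
  qed
  then have "(\<theta> * Nv - 2 * D) * Nv \<le> lam * Nv" by (simp add: algebra_simps power2_eq_square)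
  then have "\<theta> * Nv - 2 * D \<le> lam" using Nvpos by simp
  then have "\<theta> * Nv - 4 * D \<le> \<theta> * a^2" using Qe Qe2 QWe by linarith
  moreover have "\<theta> * (\<gamma> * \<sigma> / 2) \<le> \<theta> * Nv"
  proof -
    have "\<gamma> * \<sigma> \<le> \<gamma> * (2 * \<sigma>p)" using sig2 g0 by simp
    then show ?thesis using Nvb th by simp
  qed
  moreover have "4 * D \<le> \<theta> * (\<gamma> * \<sigma> / 4)"
  proof -
    have "B \<le> \<theta> * \<gamma> * \<sigma> / 16" unfolding B_def using th g0 sigpos sg0
      by (simp add: mult_le_cancel_left_pos)
    then show ?thesis using DB by simp
  qed
  ultimately have "\<theta> * (\<gamma> * \<sigma> / 4) \<le> \<theta> * a^2" by simp
  then have a2: "\<gamma> * \<sigma> / 4 \<le> a^2" using th by simp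
  define s\<sigma> where "s\<sigma> = sqrt \<sigma>"
  have ss0: "s\<sigma> > 0" and ss2: "s\<sigma>^2 = \<sigma>" unfolding s\<sigma>_def using sigpos by auto
  have absa: "sg * s\<sigma> / 2 \<le> \<bar>a\<bar>"
  proof -
    have "(sg * s\<sigma> / 2)^2 \<le> a^2" using a2 sg2 ss2 by (simp add: power_mult_distrib power_divide)
    then show ?thesis using sg0 ss0 by (simp add: abs_le_square_iff[symmetric])
  qed
  define we where "we = (\<lambda>i. \<Sum>j\<in>Sp. W i j * e j)"
  define g where "g = mat_vec n (Gamma_hat m x) e"
  have gdec: "g i = (\<theta> * a) * v i + we i" for i
  proof -
    have "g i = (\<Sum>j\<in>Sp. G i j * e j)" unfolding g_def mat_vec_def G_def
      by (rule sum.mono_neutral_right) (use Spn e0 in auto)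
    also have "\<dots> = \<theta> * v i * (\<Sum>j\<in>Sp. v j * e j) + we i"
      unfolding GW we_def by (simp add: algebra_simps sum.distrib sum_distrib_left)
    finally show ?thesis unfolding a_def by simp
  qed
  have gfun: "g = (\<lambda>i. (\<theta> * a) * v i + we i)" using gdec by (intro ext) simp
  obtain U where U: "U \<subseteq> {..<n}" "card U = p + 1" "(\<Sum>i\<in>U. (v i)^2) = \<sigma>"
    using sa_top[OF pn, of v] unfolding \<sigma>_def L_def by blast
  have T: "Sp1 \<subseteq> {..<n}" "card Sp1 = p + 1" using top unfolding top_entries_def by auto
  have finT: "finite Sp1" and finU: "finite U" using T(1) U(1) finite_subset by auto
  have "(\<Sum>i\<in>U. (g i)^2) \<le> (\<Sum>i\<in>Sp1. (g i)^2)"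
    using top_sum[OF top[folded g_def] U(1) U(2)] .
  then have gUT: "L2_set g U \<le> L2_set g Sp1" unfolding L2_set_def by (rule real_sqrt_le_mono)
  have weT: "L2_set we Sp1 \<le> 2 * D"
  proof -
    have "L2_set we Sp1 \<le> spec_norm W (Sp1 \<union> Sp) (Sp1 \<union> Sp)"
      unfolding we_def by (rule wbound[OF _ _ _ e0 e1]) (use finT finSp in auto)
    also have "\<dots> \<le> 2 * D"
    proof (rule epsR)
      show "Sp1 \<union> Sp \<subseteq> {..<n}" using T(1) Spn by auto
      show "Sp1 \<union> Sp \<noteq> {}" using Spne by auto
      have "card (Sp1 \<union> Sp) \<le> card Sp1 + card Sp" by (rule card_Un_le)
      then show "card (Sp1 \<union> Sp) \<le> 2 * (p + 1)" using T(2) cSp by simp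
    qed
    finally show ?thesis .
  qed
  have weU: "L2_set we U \<le> 2 * D"
  proof -
    have "L2_set we U \<le> spec_norm W (U \<union> Sp) (U \<union> Sp)"
      unfolding we_def by (rule wbound[OF _ _ _ e0 e1]) (use finU finSp in auto)
    also have "\<dots> \<le> 2 * D"
    proof (rule epsR)
      show "U \<union> Sp \<subseteq> {..<n}" using U(1) Spn by auto
      show "U \<union> Sp \<noteq> {}" using Spne by auto
      have "card (U \<union> Sp) \<le> card U + card Sp" by (rule card_Un_le)
      then show "card (U \<union> Sp) \<le> 2 * (p + 1)" using U(2) cSp by simp
    qed
    finally show ?thesis .
  qed
  have T1: "L2_set g Sp1 \<le> \<bar>\<theta> * a\<bar> * L2_set v Sp1 + L2_set we Sp1"
  proof -
    have "L2_set g Sp1 \<le> L2_set (\<lambda>i. (\<theta> * a) * v i) Sp1 + L2_set we Sp1"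
      unfolding gfun by (rule L2_set_triangle_ineq)
    then show ?thesis unfolding L2_scale .
  qed
  have T2: "\<bar>\<theta> * a\<bar> * L2_set v U \<le> L2_set g U + L2_set we U"
  proof -
    have eq: "(\<lambda>i. (\<theta> * a) * v i) = (\<lambda>i. g i + (- we i))" unfolding gfun by (intro ext) simp
    have "L2_set (\<lambda>i. (\<theta> * a) * v i) U \<le> L2_set g U + L2_set (\<lambda>i. - we i) U"
      unfolding eq by (rule L2_set_triangle_ineq)
    moreover have "L2_set (\<lambda>i. - we i) U = L2_set we U" unfolding L2_set_def by simp
    ultimately show ?thesis unfolding L2_scale by simp
  qed
  have vU: "L2_set v U = s\<sigma>" unfolding L2_set_def U(3) s\<sigma>_def ..
  have absth: "\<bar>\<theta> * a\<bar> = \<theta> * \<bar>a\<bar>" using th by (simp add: abs_mult)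
  have main: "\<theta> * \<bar>a\<bar> * s\<sigma> \<le> \<theta> * \<bar>a\<bar> * L2_set v Sp1 + 4 * D"
    using T1 T2 gUT weT weU unfolding vU absth by linarith
  have goal_eq: "sqrt (\<gamma> / s_fun n v (p + 1)) = sg * s\<sigma>"
    unfolding sf1 sg_def s\<sigma>_def by (simp add: real_sqrt_mult)
  have "sg * s\<sigma> \<le> L2_set v Sp1"
  proof (rule ccontr)
    assume "\<not> ?thesis"
    then have lt: "L2_set v Sp1 < sg * s\<sigma>" by simp
    have pos1: "0 \<le> \<theta> * \<bar>a\<bar>" using th by simp
    have "s\<sigma> * (1 - sg) \<le> s\<sigma> - L2_set v Sp1" using lt by (simp add: algebra_simps)
    then have "\<theta> * \<bar>a\<bar> * (s\<sigma> * (1 - sg)) \<le> \<theta> * \<bar>a\<bar> * (s\<sigma> - L2_set v Sp1)"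
      by (rule mult_left_mono[OF _ pos1])
    also have "\<dots> \<le> 4 * D" using main by (simp add: algebra_simps)
    finally have h1: "\<theta> * \<bar>a\<bar> * (s\<sigma> * (1 - sg)) \<le> 4 * D" .
    have "\<theta> * (sg * s\<sigma> / 2) \<le> \<theta> * \<bar>a\<bar>" using absa th by simp
    then have "\<theta> * (sg * s\<sigma> / 2) * (s\<sigma> * (1 - sg)) \<le> \<theta> * \<bar>a\<bar> * (s\<sigma> * (1 - sg))"
      by (rule mult_right_mono) (use ss0 sg1 in simp)
    also have "\<dots> \<le> 4 * D" by (rule h1)
    also have "\<dots> \<le> 4 * B" using DB by simp
    finally have h2: "\<theta> * (sg * s\<sigma> / 2) * (s\<sigma> * (1 - sg)) \<le> 4 * B" .
    define K where "K = \<theta> * sg * \<sigma> * (1 - sg)"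
    have Kpos: "K > 0" unfolding K_def using th sg0 sg1 sigpos by simp
    have l: "\<theta> * (sg * s\<sigma> / 2) * (s\<sigma> * (1 - sg)) = K / 2"
      unfolding K_def ss2[symmetric] by (simp add: power2_eq_square)
    have r: "4 * B = K * sg / 4"
      unfolding K_def B_def sg2[symmetric] by (simp add: power2_eq_square)
    have "K * 2 \<le> K * sg" using h2 unfolding l r by simp
    then have "2 \<le> sg" using Kpos by simp
    then show False using sg1 by simp
  qed
  then show "sqnorm_on Sp1 v \<ge> sqrt (\<gamma> / s_fun n v (p + 1))"
    unfolding goal_eq sqnorm_on_def L2_set_def[symmetric] .
qed

end
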